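(* Let $m,n$ be positive integers and let $U=\begin{pmatrix} A & B\\ C & D\end{pmatrix}$ be an $(m+n)\times(m+n)$ unitary matrix decomposed with respect to $\mathbb C^m\oplus\mathbb C^n$. Let $\Psi(z)=A+zB(I-zD)^{-1}C$ and $\Psi'(w)=D^*+wB^*(I-wA^* )^{-1}C^*$. Then $$\{(z,w)\in\mathbb D^2:\det(\Psi(z)-wI)=0\}=\{(z,w)\in\mathbb D^2:\det(\Psi'(w)-zI)=0\}=\left\{(z,w)\in\mathbb D^2:\det\begin{pmatrix} A-wI & zB\\ C & zD-I\end{pmatrix}=0\right\},$$ and this set $V$, if non-empty, is a distinguished variety.
   Context: $\mathbb D$ is the open unit disk and $\mathbb D^2$ the open bidisk. A non-empty set $V\subseteq\mathbb C^2$ is a distinguished variety if there is a polynomial $p\in\mathbb C[z,w]$ with $V=\{(z,w)\in\mathbb D^2: p(z,w)=0\}$ and $\overline V\cap\partial(\mathbb D^2)=\overline V\cap(\partial\mathbb D)^2$, where $\partial\mathbb D$ is the unit circle. *)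

theory Defs
  imports "HOL-Analysis.Analysis" "HOL-Computational_Algebra.Polynomial"
begin

definition cadj :: "complex^'n^'m \<Rightarrow> complex^'m^'n" where
  "cadj M = (\<chi> i j. cnj (M $ j $ i))"

definition unitary :: "complex^'n^'n \<Rightarrow> bool" where
  "unitary U \<longleftrightarrow> U ** cadj U = mat 1 \<and> cadj U ** U = mat 1"

definition blkA :: "'a^('m::finite+'n::finite)^('m+'n) \<Rightarrow> 'a^'m^'m" where
  "blkA U = (\<chi> i j. U $ Inl i $ Inl j)"
definition blkB :: "'a^('m::finite+'n::finite)^('m+'n) \<Rightarrow> 'a^'n^'m" where
  "blkB U = (\<chi> i j. U $ Inl i $ Inr j)"
definition blkC :: "'a^('m::finite+'n::finite)^('m+'n) \<Rightarrow> 'a^'m^'n" where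
  "blkC U = (\<chi> i j. U $ Inr i $ Inl j)"
definition blkD :: "'a^('m::finite+'n::finite)^('m+'n) \<Rightarrow> 'a^'n^'n" where
  "blkD U = (\<chi> i j. U $ Inr i $ Inr j)"

definition block :: "'a^'m::finite^'m \<Rightarrow> 'a^'n^'m \<Rightarrow> 'a^'m^'n \<Rightarrow> 'a^'n::finite^'n \<Rightarrow> 'a^('m+'n)^('m+'n)" where
  "block P Q R S = (\<chi> i j. case i of
       Inl a \<Rightarrow> (case j of Inl b \<Rightarrow> P $ a $ b | Inr b \<Rightarrow> Q $ a $ b)
     | Inr a \<Rightarrow> (case j of Inl b \<Rightarrow> R $ a $ b | Inr b \<Rightarrow> S $ a $ b))"

text \<open>Bivariate polynomials in C[z,w] represented as polynomials in w whose
  coefficients are polynomials in z.\<close>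
definition poly2 :: "complex poly poly \<Rightarrow> complex \<Rightarrow> complex \<Rightarrow> complex" where
  "poly2 p z w = poly (map_poly (\<lambda>c. poly c z) p) w"

abbreviation bidisk :: "(complex \<times> complex) set" where
  "bidisk \<equiv> ball 0 1 \<times> ball 0 1"

definition distinguished_variety :: "(complex \<times> complex) set \<Rightarrow> bool" where
  "distinguished_variety V \<longleftrightarrow> V \<noteq> {} \<and>
     (\<exists>p :: complex poly poly. V = {(z, w). (z, w) \<in> bidisk \<and> poly2 p z w = 0}) \<and>
     closure V \<inter> frontier bidisk = closure V \<inter> (sphere 0 1 \<times> sphere 0 1)"

end

theory Submission
  imports Defs
begin

definition cinner :: "complex^'a \<Rightarrow> complex^'a \<Rightarrow> complex" where
  "cinner u v = (\<Sum>i\<in>UNIV. u$i * cnj (v$i))"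

definition nn :: "complex^'a \<Rightarrow> real" where
  "nn v = (\<Sum>i\<in>UNIV. (cmod (v$i))^2)"

definition tp :: "'a^('m::finite+'n::finite) \<Rightarrow> 'a^'m" where
  "tp x = (\<chi> a. x $ Inl a)"
definition bt :: "'a^('m::finite+'n::finite) \<Rightarrow> 'a^'n" where
  "bt x = (\<chi> a. x $ Inr a)"
definition join :: "'a^'m::finite \<Rightarrow> 'a^'n::finite \<Rightarrow> 'a^('m+'n)" where
  "join u v = (\<chi> i. case i of Inl a \<Rightarrow> u$a | Inr b \<Rightarrow> v$b)"

definition dl :: "complex \<Rightarrow> complex^('m::finite+'n::finite) \<Rightarrow> complex^('m+'n)" where
  "dl z x = (\<chi> i. case i of Inl a \<Rightarrow> x$i | Inr b \<Rightarrow> z * x$i)"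
definition el :: "complex \<Rightarrow> complex^('m::finite+'n::finite) \<Rightarrow> complex^('m+'n)" where
  "el w x = (\<chi> i. case i of Inl a \<Rightarrow> w * x$i | Inr b \<Rightarrow> x$i)"

lemma sum_UNIV_plus: "(\<Sum>i\<in>(UNIV::('m::finite+'n::finite) set). f i) = (\<Sum>a\<in>UNIV. f (Inl a)) + (\<Sum>b\<in>UNIV. f (Inr b))"
proof -
  have "sum f (UNIV <+> UNIV) = sum (f \<circ> Inl) UNIV + sum (f \<circ> Inr) UNIV"
    by (rule sum.Plus) auto
  then show ?thesis by (simp add: UNIV_Plus_UNIV comp_def)
qed

lemma tp_join[simp]: "tp (join u v) = u" and bt_join[simp]: "bt (join u v) = v"
  by (simp_all add: tp_def bt_def join_def vec_eq_iff)

lemma join_top_bot: "join (tp x) (bt x) = x"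
  by (simp add: tp_def bt_def join_def vec_eq_iff split: sum.split)

lemma vec_eq_tb: "x = y \<longleftrightarrow> tp x = tp y \<and> bt x = bt y"
  by (metis join_top_bot)

lemma tp_nth[simp]: "tp x $ a = x $ Inl a" and bt_nth[simp]: "bt x $ b = x $ Inr b"
  by (simp_all add: tp_def bt_def)

lemma tp_dl[simp]: "tp (dl z x) = tp x" and bt_dl[simp]: "bt (dl z x) = z *s bt x"
  and tp_el[simp]: "tp (el w x) = w *s tp x" and bt_el[simp]: "bt (el w x) = bt x"
  by (simp_all add: vec_eq_iff dl_def el_def)

lemma tp_add[simp]: "tp (x + y) = tp x + tp y" and bt_add[simp]: "bt (x + y) = bt x + bt y"
  and tp_diff[simp]: "tp (x - y) = tp x - tp y" and bt_diff[simp]: "bt (x - y) = bt x - bt y"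
  and tp_smult[simp]: "tp (c *s x) = c *s tp x" and bt_smult[simp]: "bt (c *s x) = c *s bt x"
  and tp_zero[simp]: "tp 0 = 0" and bt_zero[simp]: "bt 0 = 0"
  by (simp_all add: vec_eq_iff)

lemma tp_mult: "tp (M *v x) = blkA M *v tp x + blkB M *v bt x"
  and bt_mult: "bt (M *v x) = blkC M *v tp x + blkD M *v bt x"
  by (simp_all add: vec_eq_iff matrix_vector_mult_def blkA_def blkB_def blkC_def blkD_def sum_UNIV_plus)

lemma block_blks: "blkA (block P Q R S) = P" "blkB (block P Q R S) = Q" "blkC (block P Q R S) = R" "blkD (block P Q R S) = S"
  by (simp_all add: vec_eq_iff blkA_def blkB_def blkC_def blkD_def block_def)

lemma blk_cadj: "blkA (cadj M) = cadj (blkA M)" "blkB (cadj M) = cadj (blkC M)"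
   "blkC (cadj M) = cadj (blkB M)" "blkD (cadj M) = cadj (blkD M)"
  by (simp_all add: vec_eq_iff blkA_def blkB_def blkC_def blkD_def cadj_def)

lemma cadj_cadj[simp]: "cadj (cadj M) = M"
  by (simp add: cadj_def vec_eq_iff)

lemma unitary_cadj: "unitary U \<Longrightarrow> unitary (cadj U)"
  by (simp add: unitary_def)

lemma sum_delta_mult: "(\<Sum>k\<in>UNIV. (if i = k then z else 0) * f k) = (z::complex) * (f::'k::finite \<Rightarrow> complex) i"
proof -
  have "(\<Sum>k\<in>UNIV. (if i = k then z else 0) * f k) = (\<Sum>k\<in>UNIV. if k = i then z * f k else 0)"
    by (rule sum.cong) auto
  also have "\<dots> = z * f i" by simp
  finally show ?thesis .
qed

lemma mat_mult_left: "(mat z ** (B::complex^'a^'b)) $ i $ j = z * B $ i $ j"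
  by (simp add: matrix_matrix_mult_def mat_def sum_delta_mult)

lemma mat_mult_vec: "(mat z ** (B::complex^'a^'b)) *v v = z *s (B *v v)"
  by (simp add: vec_eq_iff matrix_vector_mult_def mat_mult_left sum_distrib_left mult.assoc)

lemma mat_vec: "mat z *v (v::complex^'a) = z *s v"
  by (simp add: vec_eq_iff matrix_vector_mult_def mat_def sum_delta_mult)

lemma mult_vec_smult: "(B::complex^'a^'b) *v (z *s v) = z *s (B *v v)"
  by (auto simp: vec_eq_iff matrix_vector_mult_def sum_distrib_left algebra_simps intro!: sum.cong)

lemma cinner_adj: "cinner (M *v u) v = cinner u (cadj M *v v)"
proof -
  have "cinner (M *v u) v = (\<Sum>i\<in>UNIV. \<Sum>j\<in>UNIV. M$i$j * u$j * cnj (v$i))"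
    by (simp add: cinner_def matrix_vector_mult_def sum_distrib_right)
  also have "\<dots> = (\<Sum>j\<in>UNIV. \<Sum>i\<in>UNIV. M$i$j * u$j * cnj (v$i))"
    by (rule sum.swap)
  also have "\<dots> = cinner u (cadj M *v v)"
    by (simp add: cinner_def matrix_vector_mult_def cadj_def sum_distrib_left algebra_simps)
  finally show ?thesis .
qed

lemma cinner_smult_left: "cinner (c *s u) v = c * cinner u v"
  and cinner_smult_right: "cinner u (c *s v) = cnj c * cinner u v"
  by (simp_all add: cinner_def sum_distrib_left algebra_simps)

lemma cinner_self: "cinner v v = complex_of_real (nn v)"
proof -
  have "v$i * cnj (v$i) = complex_of_real ((cmod (v$i))^2)" for i
    by (metis complex_norm_square)
  then show ?thesis by (simp add: cinner_def nn_def of_real_sum)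
qed

lemma nn_zero_iff: "nn v = 0 \<longleftrightarrow> v = 0"
  by (simp add: nn_def sum_nonneg_eq_0_iff vec_eq_iff)

lemma nn_nonneg: "nn v \<ge> 0"
  by (simp add: nn_def sum_nonneg)

lemma nn_smult: "nn (c *s v) = (cmod c)^2 * nn v"
  by (simp add: nn_def sum_distrib_left norm_mult power_mult_distrib)

lemma nn_split: "nn x = nn (tp x) + nn (bt x)"
  by (simp add: nn_def sum_UNIV_plus)

lemma unitary_nn: assumes "unitary U" shows "nn (U *v x) = nn x"
proof -
  have "cinner (U *v x) (U *v x) = cinner x x"
    using assms by (simp add: cinner_adj matrix_vector_mul_assoc unitary_def)
  then show ?thesis by (simp add: cinner_self)
qed

lemma det_zero_iff: "det (M::complex^'n^'n) = 0 \<longleftrightarrow> (\<exists>x. x \<noteq> 0 \<and> M *v x = 0)"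
  using invertible_det_nz[of M] invertible_left_inverse[of M] matrix_left_invertible_ker[of M]
  by auto

lemma matrix_inv_props: assumes "invertible M"
  shows "M ** matrix_inv M = mat 1" "matrix_inv M ** M = mat 1"
proof -
  have "\<exists>M'. M ** M' = mat 1 \<and> M' ** M = mat 1" using assms by (simp add: invertible_def)
  from someI_ex[OF this] show "M ** matrix_inv M = mat 1" "matrix_inv M ** M = mat 1"
    by (simp_all add: matrix_inv_def)
qed

lemma invertible_contr:
  fixes X :: "complex^'n^'n"
  assumes c: "\<And>v. nn (X *v v) \<le> nn v" and z: "cmod z < 1"
  shows "invertible (mat 1 - mat z ** X)"
proof -
  have "v = 0" if h: "(mat 1 - mat z ** X) *v v = 0" for v
  proof -
    have "v = z *s (X *v v)"
      using h by (simp add: matrix_vector_mult_diff_rdistrib mat_mult_vec)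
    then have "nn v = (cmod z)^2 * nn (X *v v)" by (metis nn_smult)
    also have "\<dots> \<le> (cmod z)^2 * nn v" by (rule mult_left_mono[OF c]) simp
    finally have "(1 - (cmod z)^2) * nn v \<le> 0" by (simp add: algebra_simps)
    moreover have "1 - (cmod z)^2 > 0" using z
      by (simp add: abs_square_less_1)
    ultimately have "nn v \<le> 0" by (simp add: mult_le_0_iff)
    then show "v = 0" using nn_nonneg[of v] nn_zero_iff[of v] by linarith
  qed
  then show ?thesis
    using invertible_left_inverse matrix_left_invertible_ker by blast
qed

lemma schur_ker:
  fixes P :: "complex^'m^'m" and Q :: "complex^'n^'m" and R :: "complex^'m^'n" and S :: "complex^'n^'n"
  assumes inv: "invertible (mat 1 - mat a ** S)"
  shows "det (P + mat a ** Q ** matrix_inv (mat 1 - mat a ** S) ** R - mat b) = 0 \<longleftrightarrow>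
    (\<exists>x1 x2. (x1 \<noteq> 0 \<or> x2 \<noteq> 0) \<and> P *v x1 + a *s (Q *v x2) = b *s x1 \<and> R *v x1 + a *s (S *v x2) = x2)"
proof -
  let ?M = "mat 1 - mat a ** S"
  let ?N = "matrix_inv ?M"
  have MN: "?M ** ?N = mat 1" and NM: "?N ** ?M = mat 1" using matrix_inv_props[OF inv] by auto
  have Mv: "?M *v v = v - a *s (S *v v)" for v
    by (simp add: matrix_vector_mult_diff_rdistrib mat_mult_vec)
  have key: "(P + mat a ** Q ** ?N ** R - mat b) *v x1 = P *v x1 + a *s (Q *v (?N *v (R *v x1))) - b *s x1" for x1
    by (simp add: matrix_vector_mult_diff_rdistrib matrix_vector_mult_add_rdistrib
        matrix_vector_mul_assoc[symmetric] mat_mult_vec mat_vec)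
  have solve: "R *v x1 + a *s (S *v x2) = x2 \<longleftrightarrow> x2 = ?N *v (R *v x1)" for x1 x2
  proof
    assume "R *v x1 + a *s (S *v x2) = x2"
    then have "?M *v x2 = R *v x1" using Mv[of x2] by (simp add: algebra_simps)
    then have "?N *v (?M *v x2) = ?N *v (R *v x1)" by simp
    then show "x2 = ?N *v (R *v x1)" by (simp add: matrix_vector_mul_assoc NM)
  next
    assume "x2 = ?N *v (R *v x1)"
    then have "?M *v x2 = (?M ** ?N) *v (R *v x1)" by (simp add: matrix_vector_mul_assoc matrix_mul_assoc)
    then have "?M *v x2 = R *v x1" by (simp add: MN)
    then show "R *v x1 + a *s (S *v x2) = x2" using Mv[of x2] by (simp add: algebra_simps)
  qed
  show ?thesis
    unfolding det_zero_iff key solve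
    by (auto simp: algebra_simps)
qed

definition K :: "complex^('m::finite+'n::finite)^('m+'n) \<Rightarrow> complex \<Rightarrow> complex \<Rightarrow> bool" where
  "K U z w \<longleftrightarrow> (\<exists>x. x \<noteq> 0 \<and> U *v dl z x = el w x)"

lemma nz_tb: "x \<noteq> 0 \<longleftrightarrow> tp x \<noteq> 0 \<or> bt x \<noteq> 0"
  using vec_eq_tb[of x 0] by simp

lemma eq_blocks: "U *v dl z x = el w x \<longleftrightarrow>
   (blkA U *v tp x + z *s (blkB U *v bt x) = w *s tp x \<and> blkC U *v tp x + z *s (blkD U *v bt x) = bt x)"
  by (subst vec_eq_tb) (simp add: tp_mult bt_mult mult_vec_smult)

lemma eq_adj: assumes "unitary U" shows "U *v dl z x = el w x \<longleftrightarrow> cadj U *v el w x = dl z x"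
proof
  assume "U *v dl z x = el w x"
  then have "cadj U *v (U *v dl z x) = cadj U *v el w x" by simp
  then show "cadj U *v el w x = dl z x" using assms
    by (simp add: matrix_vector_mul_assoc unitary_def)
next
  assume "cadj U *v el w x = dl z x"
  then have "U *v (cadj U *v el w x) = U *v dl z x" by simp
  then show "U *v dl z x = el w x" using assms
    by (simp add: matrix_vector_mul_assoc unitary_def)
qed

lemma adj_blocks: "cadj U *v el w x = dl z x \<longleftrightarrow>
   (cadj (blkD U) *v bt x + w *s (cadj (blkB U) *v tp x) = z *s bt x \<and>
    cadj (blkC U) *v bt x + w *s (cadj (blkA U) *v tp x) = tp x)"
  by (subst vec_eq_tb) (auto simp: tp_mult bt_mult mult_vec_smult blk_cadj algebra_simps)

lemma contr_D: assumes "unitary U" shows "nn (blkD U *v v) \<le> nn v"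
proof -
  have "nn (U *v join 0 v) = nn v" using unitary_nn[OF assms, of "join 0 v"] nn_split[of "join 0 v"]
    by (simp add: nn_def)
  moreover have "bt (U *v join 0 v) = blkD U *v v" by (simp add: bt_mult)
  ultimately show ?thesis using nn_split[of "U *v join 0 v"] nn_nonneg[of "tp (U *v join 0 v)"] by simp
qed

lemma contr_Aadj: assumes "unitary U" shows "nn (cadj (blkA U) *v v) \<le> nn v"
proof -
  have u: "unitary (cadj U)" using assms by (rule unitary_cadj)
  have "nn (cadj U *v join v 0) = nn v" using unitary_nn[OF u, of "join v 0"] nn_split[of "join v 0"]
    by (simp add: nn_def)
  moreover have "tp (cadj U *v join v 0) = cadj (blkA U) *v v" by (simp add: tp_mult blk_cadj)
  ultimately show ?thesis using nn_split[of "cadj U *v join v 0"] nn_nonneg[of "bt (cadj U *v join v 0)"] by simp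
qed

lemma set1:
  assumes "unitary U" "cmod z < 1"
  shows "det (blkA U + mat z ** blkB U ** matrix_inv (mat 1 - mat z ** blkD U) ** blkC U - mat w) = 0
     \<longleftrightarrow> K U z w"
proof -
  have inv: "invertible (mat 1 - mat z ** blkD U)"
    by (rule invertible_contr[OF contr_D[OF assms(1)] assms(2)])
  show ?thesis
    unfolding schur_ker[OF inv] K_def
  proof (intro iffI; elim exE conjE)
    fix x1 x2 assume h: "x1 \<noteq> 0 \<or> x2 \<noteq> 0"
      "blkA U *v x1 + z *s (blkB U *v x2) = w *s x1" "blkC U *v x1 + z *s (blkD U *v x2) = x2"
    show "\<exists>x. x \<noteq> 0 \<and> U *v dl z x = el w x"
      by (rule exI[of _ "join x1 x2"]) (use h in \<open>auto simp: eq_blocks nz_tb\<close>)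
  next
    fix x assume "x \<noteq> 0" "U *v dl z x = el w x"
    then show "\<exists>x1 x2. (x1 \<noteq> 0 \<or> x2 \<noteq> 0) \<and>
       blkA U *v x1 + z *s (blkB U *v x2) = w *s x1 \<and> blkC U *v x1 + z *s (blkD U *v x2) = x2"
      by (intro exI[of _ "tp x"] exI[of _ "bt x"]) (auto simp: eq_blocks nz_tb)
  qed
qed

lemma set2:
  assumes "unitary U" "cmod w < 1"
  shows "det (cadj (blkD U) + mat w ** cadj (blkB U) ** matrix_inv (mat 1 - mat w ** cadj (blkA U))
                ** cadj (blkC U) - mat z) = 0 \<longleftrightarrow> K U z w"
proof -
  have inv: "invertible (mat 1 - mat w ** cadj (blkA U))"
    by (rule invertible_contr[OF contr_Aadj[OF assms(1)] assms(2)])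
  show ?thesis
    unfolding schur_ker[OF inv] K_def eq_adj[OF assms(1)]
  proof (intro iffI; elim exE conjE)
    fix x1 x2 assume h: "x1 \<noteq> 0 \<or> x2 \<noteq> 0"
      "cadj (blkD U) *v x1 + w *s (cadj (blkB U) *v x2) = z *s x1"
      "cadj (blkC U) *v x1 + w *s (cadj (blkA U) *v x2) = x2"
    show "\<exists>x. x \<noteq> 0 \<and> cadj U *v el w x = dl z x"
      by (rule exI[of _ "join x2 x1"]) (use h in \<open>auto simp: adj_blocks nz_tb\<close>)
  next
    fix x assume "x \<noteq> 0" "cadj U *v el w x = dl z x"
    then show "\<exists>x1 x2. (x1 \<noteq> 0 \<or> x2 \<noteq> 0) \<and>
       cadj (blkD U) *v x1 + w *s (cadj (blkB U) *v x2) = z *s x1 \<and>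
       cadj (blkC U) *v x1 + w *s (cadj (blkA U) *v x2) = x2"
      by (intro exI[of _ "bt x"] exI[of _ "tp x"]) (auto simp: adj_blocks nz_tb)
  qed
qed

lemma set3:
  "det (block (blkA U - mat w) (mat z ** blkB U) (blkC U) (mat z ** blkD U - mat 1)) = 0 \<longleftrightarrow> K U z w"
proof -
  have "block (blkA U - mat w) (mat z ** blkB U) (blkC U) (mat z ** blkD U - mat 1) *v x = 0
        \<longleftrightarrow> U *v dl z x = el w x" for x
    unfolding eq_blocks
    by (subst vec_eq_tb) (auto simp: tp_mult bt_mult block_blks matrix_vector_mult_diff_rdistrib
        mat_mult_vec mat_vec algebra_simps)
  then show ?thesis unfolding det_zero_iff K_def by simp
qed

lemma poly2_add: "poly2 (p + q) z w = poly2 p z w + poly2 q z w"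
proof -
  have "map_poly (\<lambda>c. poly c z) (p + q) = map_poly (\<lambda>c. poly c z) p + map_poly (\<lambda>c. poly c z) q"
    by (rule poly_eqI) (simp add: coeff_map_poly)
  then show ?thesis by (simp add: poly2_def)
qed

lemma poly2_pCons: "poly2 (pCons a p) z w = poly a z + w * poly2 p z w"
  by (simp add: poly2_def map_poly_pCons)

lemma poly2_0[simp]: "poly2 0 z w = 0"
  by (simp add: poly2_def)

lemma poly2_smult: "poly2 (smult a p) z w = poly a z * poly2 p z w"
  by (simp add: poly2_def map_poly_smult)

lemma poly2_mult: "poly2 (p * q) z w = poly2 p z w * poly2 q z w"
proof (induction p rule: pCons_induct)
  case 0
  then show ?case by (simp add: poly2_def)
next
  case (pCons a p)
  then show ?case
    by (simp add: poly2_add poly2_smult poly2_pCons algebra_simps)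
qed

definition rep :: "(complex \<Rightarrow> complex \<Rightarrow> complex) \<Rightarrow> bool" where
  "rep f \<longleftrightarrow> (\<exists>p. \<forall>z w. f z w = poly2 p z w)"

lemma rep_const: "rep (\<lambda>z w. c)"
  unfolding rep_def by (rule exI[of _ "[:[:c:]:]"]) (simp add: poly2_pCons)

lemma rep_z: "rep (\<lambda>z w. z)"
  unfolding rep_def by (rule exI[of _ "[:[:0, 1:]:]"]) (simp add: poly2_pCons)

lemma rep_w: "rep (\<lambda>z w. w)"
  unfolding rep_def by (rule exI[of _ "[:0, 1:]"]) (simp add: poly2_pCons)

lemma rep_if: "rep f \<Longrightarrow> rep g \<Longrightarrow> rep (\<lambda>z w. if P then f z w else g z w)"
  by (cases P) auto

lemma mat_nth: "mat k $ i $ j = (if i = j then k else 0)"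
  by (simp add: mat_def)

lemma rep_add: "rep f \<Longrightarrow> rep g \<Longrightarrow> rep (\<lambda>z w. f z w + g z w)"
  unfolding rep_def by (metis poly2_add)

lemma rep_mult: "rep f \<Longrightarrow> rep g \<Longrightarrow> rep (\<lambda>z w. f z w * g z w)"
  unfolding rep_def by (metis poly2_mult)

lemma rep_diff: "rep f \<Longrightarrow> rep g \<Longrightarrow> rep (\<lambda>z w. f z w - g z w)"
proof -
  assume "rep f" "rep g"
  then have "rep (\<lambda>z w. f z w + (-1) * g z w)" by (intro rep_add rep_mult rep_const)
  then show ?thesis by simp
qed

lemma rep_sum: "finite S \<Longrightarrow> (\<And>i. i \<in> S \<Longrightarrow> rep (f i)) \<Longrightarrow> rep (\<lambda>z w. \<Sum>i\<in>S. f i z w)"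
proof (induction S rule: finite_induct)
  case empty
  then show ?case using rep_const[of 0] by simp
next
  case (insert x F)
  then show ?case by (simp add: rep_add)
qed

lemma rep_prod: "finite S \<Longrightarrow> (\<And>i. i \<in> S \<Longrightarrow> rep (f i)) \<Longrightarrow> rep (\<lambda>z w. \<Prod>i\<in>S. f i z w)"
proof (induction S rule: finite_induct)
  case empty
  then show ?case using rep_const[of 1] by simp
next
  case (insert x F)
  then show ?case by (simp add: rep_mult)
qed

lemma rep_det:
  fixes M :: "complex \<Rightarrow> complex \<Rightarrow> complex^'n^'n"
  assumes "\<And>i j. rep (\<lambda>z w. M z w $ i $ j)"
  shows "rep (\<lambda>z w. det (M z w))"
  unfolding det_def
  by (intro rep_sum rep_mult rep_prod rep_const assms) auto

lemma rep_block:
  "rep (\<lambda>z w. det (block (blkA U - mat w) (mat z ** blkB U) (blkC U) (mat z ** blkD U - mat 1)))"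
proof (rule rep_det)
  fix i j :: "'a + 'b"
  show "rep (\<lambda>z w. block (blkA U - mat w) (mat z ** blkB U) (blkC U) (mat z ** blkD U - mat 1) $ i $ j)"
    by (cases i; cases j)
      (auto simp: block_def mat_mult_left mat_nth intro!: rep_diff rep_mult rep_const rep_z rep_w rep_if)
qed

lemma nn_norm: "nn x = (norm x)^2"
  by (simp add: nn_def norm_vec_def L2_set_def sum_nonneg)

lemma cinner_split: "cinner u v = cinner (tp u) (tp v) + cinner (bt u) (bt v)"
  by (simp add: cinner_def sum_UNIV_plus)

lemma cinner_zero_right[simp]: "cinner u 0 = 0"
  by (simp add: cinner_def)

lemma dl_smult: "dl z (c *s x) = c *s dl z x" and el_smult: "el w (c *s x) = c *s el w x"
  by (subst vec_eq_tb; simp add: algebra_simps)+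

lemma seq_unit:
  assumes "\<forall>k. K U (zs k) (ws k)"
  shows "\<exists>xs. \<forall>k. norm (xs k) = 1 \<and> U *v dl (zs k) (xs k) = el (ws k) (xs k)"
proof -
  have "\<exists>y. norm y = 1 \<and> U *v dl (zs k) y = el (ws k) y" for k
  proof -
    obtain x where x: "x \<noteq> 0" "U *v dl (zs k) x = el (ws k) x" using assms K_def by blast
    define c where "c = complex_of_real (1 / norm x)"
    have "nn (c *s x) = (cmod c)^2 * nn x" by (rule nn_smult)
    also have "\<dots> = (1 / norm x)^2 * (norm x)^2" by (simp add: c_def nn_norm norm_divide)
    also have "\<dots> = 1" using x(1) by (simp add: power_divide)
    finally have "nn (c *s x) = 1" .
    then have "norm (c *s x) = 1" unfolding nn_norm
      by (metis norm_ge_zero power2_eq_1_iff abs_of_nonneg abs_1 real_sqrt_abs real_sqrt_one)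
    moreover have "U *v dl (zs k) (c *s x) = el (ws k) (c *s x)"
      using x(2) by (simp add: dl_smult el_smult mult_vec_smult)
    ultimately show ?thesis by blast
  qed
  then show ?thesis by metis
qed

lemma limit_eq:
  assumes "zs \<longlonglongrightarrow> z0" "ws \<longlonglongrightarrow> w0" "xs \<longlonglongrightarrow> x"
    "\<forall>k. U *v dl (zs k) (xs k) = el (ws k) (xs k)"
  shows "U *v dl z0 x = el w0 x"
proof -
  have dlc: "(\<lambda>k. dl (zs k) (xs k) $ j) \<longlonglongrightarrow> dl z0 x $ j" for j
    by (cases j) (auto simp: dl_def intro!: tendsto_intros assms)
  have elc: "(\<lambda>k. el (ws k) (xs k) $ j) \<longlonglongrightarrow> el w0 x $ j" for j
    by (cases j) (auto simp: el_def intro!: tendsto_intros assms)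
  have "(\<lambda>k. (U *v dl (zs k) (xs k)) $ i) \<longlonglongrightarrow> (U *v dl z0 x) $ i" for i
    unfolding matrix_vector_mult_def by (simp, intro tendsto_intros dlc)
  then have "(\<lambda>k. el (ws k) (xs k) $ i) \<longlonglongrightarrow> (U *v dl z0 x) $ i" for i
    using assms(4) by simp
  then show ?thesis using elc by (auto simp: vec_eq_iff intro: LIMSEQ_unique)
qed

lemma cinner_lim: assumes "xs \<longlonglongrightarrow> x" shows "(\<lambda>k. cinner (xs k) x) \<longlonglongrightarrow> cinner x x"
  unfolding cinner_def by (intro tendsto_intros assms)

lemma bdry:
  assumes U: "unitary U" and s: "\<forall>k. K U (zs k) (ws k) \<and> cmod (zs k) < 1 \<and> cmod (ws k) < 1"
    and zl: "zs \<longlonglongrightarrow> z0" and wl: "ws \<longlonglongrightarrow> w0"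
    and c: "(cmod z0 < 1 \<and> cmod w0 = 1) \<or> (cmod z0 = 1 \<and> cmod w0 < 1)"
  shows False
proof -
  obtain xs where xs: "\<forall>k. norm (xs k) = 1 \<and> U *v dl (zs k) (xs k) = el (ws k) (xs k)"
    using seq_unit[of U zs ws] s by blast
  have "seq_compact (sphere (0::complex^('a+'b)) 1)"
    by (intro compact_imp_seq_compact compact_sphere)
  then obtain l r where l: "l \<in> sphere 0 1" and r: "strict_mono r" and xl: "(xs \<circ> r) \<longlonglongrightarrow> l"
    unfolding seq_compact_def using xs by (metis mem_sphere_0)
  define z' where "z' = zs \<circ> r"
  define w' where "w' = ws \<circ> r"
  define x' where "x' = xs \<circ> r"
  have z'l: "z' \<longlonglongrightarrow> z0" unfolding z'_def by (rule LIMSEQ_subseq_LIMSEQ[OF zl r])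
  have w'l: "w' \<longlonglongrightarrow> w0" unfolding w'_def by (rule LIMSEQ_subseq_LIMSEQ[OF wl r])
  have x'l: "x' \<longlonglongrightarrow> l" unfolding x'_def by (rule xl)
  have eqk: "\<forall>k. U *v dl (z' k) (x' k) = el (w' k) (x' k)"
    using xs by (simp add: z'_def w'_def x'_def)
  have z'b: "cmod (z' k) < 1" and w'b: "cmod (w' k) < 1" for k
    using s by (simp_all add: z'_def w'_def)
  have lim: "U *v dl z0 l = el w0 l" by (rule limit_eq[OF z'l w'l x'l eqk])
  have nl: "nn l = 1" using l by (simp add: nn_norm)
  have "nn (dl z0 l) = nn (el w0 l)" using unitary_nn[OF U, of "dl z0 l"] lim by simp
  then have nid: "nn (tp l) + (cmod z0)^2 * nn (bt l) = (cmod w0)^2 * nn (tp l) + nn (bt l)"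
    by (simp add: nn_split[of "dl z0 l"] nn_split[of "el w0 l"] nn_smult)
  have cl: "(\<lambda>k. cinner (x' k) l) \<longlonglongrightarrow> 1"
    using cinner_lim[OF x'l] by (simp add: cinner_self nl)
  then have "eventually (\<lambda>k. cinner (x' k) l \<noteq> 0) sequentially"
    by (rule tendsto_imp_eventually_ne) simp
  then obtain N where N: "cinner (x' N) l \<noteq> 0" by (auto simp: eventually_sequentially)
  have inner_eq: "cinner (dl (z' N) (x' N)) (cadj U *v l) = cinner (el (w' N) (x' N)) l"
    using eqk cinner_adj[of U "dl (z' N) (x' N)" l] by metis
  from c show False
  proof
    assume h: "cmod z0 < 1 \<and> cmod w0 = 1"
    have "(1 - (cmod z0)^2) * nn (bt l) = 0" using nid h by (simp add: algebra_simps)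
    moreover have "1 - (cmod z0)^2 \<noteq> 0" using h by (simp add: abs_square_eq_1)
    ultimately have bl: "bt l = 0" by (simp add: nn_zero_iff)
    have "dl z0 l = l" "el w0 l = w0 *s l" by (subst vec_eq_tb; simp add: bl)+
    then have Ul: "U *v l = w0 *s l" using lim by simp
    have ww: "cnj w0 * w0 = 1" using h complex_norm_square[of w0] by (simp add: mult.commute)
    have "cadj U *v (U *v l) = l" using U by (simp add: matrix_vector_mul_assoc unitary_def)
    then have "w0 *s (cadj U *v l) = l" by (simp add: Ul mult_vec_smult)
    then have "cnj w0 *s (w0 *s (cadj U *v l)) = cnj w0 *s l" by simp
    then have Ual: "cadj U *v l = cnj w0 *s l" by (simp add: ww)
    have "w0 * cinner (x' N) l = w' N * cinner (x' N) l"
      using inner_eq unfolding Ual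
      by (simp add: cinner_smult_right cinner_split[of _ l] bl cinner_smult_left)
    then have "w' N = w0" using N by simp
    then show False using w'b[of N] h by simp
  next
    assume h: "cmod z0 = 1 \<and> cmod w0 < 1"
    have "(1 - (cmod w0)^2) * nn (tp l) = 0" using nid h by (simp add: algebra_simps)
    moreover have "1 - (cmod w0)^2 \<noteq> 0" using h by (simp add: abs_square_eq_1)
    ultimately have tl: "tp l = 0" by (simp add: nn_zero_iff)
    have "dl z0 l = z0 *s l" "el w0 l = l" by (subst vec_eq_tb; simp add: tl)+
    then have Ul: "z0 *s (U *v l) = l" using lim by (simp add: mult_vec_smult)
    have Ual: "cadj U *v l = z0 *s l"
    proof -
      have "cadj U *v l = cadj U *v (z0 *s (U *v l))" using Ul by simp
      also have "\<dots> = z0 *s l" using U by (simp add: mult_vec_smult matrix_vector_mul_assoc unitary_def)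
      finally show ?thesis .
    qed
    have "cnj z0 * z' N * cinner (x' N) l = cinner (x' N) l"
      using inner_eq unfolding Ual
      by (simp add: cinner_smult_right cinner_split[of _ l] tl cinner_smult_left)
    then have "cnj z0 * z' N = 1" using N by simp
    then have "cmod z0 * cmod (z' N) = 1" by (metis complex_mod_cnj norm_mult norm_one)
    then show False using z'b[of N] h by simp
  qed
qed

theorem mainTheorem4:
  fixes U :: "complex^('m::finite + 'n::finite)^('m + 'n)"
    and V :: "(complex \<times> complex) set"
  assumes "unitary U"
    and "V = {(z, w). (z, w) \<in> bidisk \<and>
           det (blkA U + mat z ** blkB U ** matrix_inv (mat 1 - mat z ** blkD U) ** blkC U
                - mat w) = 0}"
  shows "V = {(z, w). (z, w) \<in> bidisk \<and>
           det (cadj (blkD U) + mat w ** cadj (blkB U) ** matrix_inv (mat 1 - mat w ** cadj (blkA U))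
                ** cadj (blkC U) - mat z) = 0}
       \<and> V = {(z, w). (z, w) \<in> bidisk \<and>
           det (block (blkA U - mat w) (mat z ** blkB U) (blkC U) (mat z ** blkD U - mat 1)) = 0}
       \<and> (V \<noteq> {} \<longrightarrow> distinguished_variety V)"
proof -
  note U = assms(1)
  define W where "W = {(z, w). (z, w) \<in> bidisk \<and> K U z w}"
  have VW: "V = W" unfolding assms(2) W_def using set1[OF U] by auto
  have S2: "{(z, w). (z, w) \<in> bidisk \<and>
           det (cadj (blkD U) + mat w ** cadj (blkB U) ** matrix_inv (mat 1 - mat w ** cadj (blkA U))
                ** cadj (blkC U) - mat z) = 0} = W"
    unfolding W_def using set2[OF U] by auto
  have S3: "{(z, w). (z, w) \<in> bidisk \<and>
           det (block (blkA U - mat w) (mat z ** blkB U) (blkC U) (mat z ** blkD U - mat 1)) = 0} = W"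
    unfolding W_def using set3[of U] by auto
  obtain p where p: "\<And>z w. det (block (blkA U - mat w) (mat z ** blkB U) (blkC U) (mat z ** blkD U - mat 1))
      = poly2 p z w"
    using rep_block[of U] unfolding rep_def by blast
  have Vp: "V = {(z, w). (z, w) \<in> bidisk \<and> poly2 p z w = 0}"
    using S3 VW by (simp add: p)
  have Wsub: "W \<subseteq> bidisk" unfolding W_def by auto
  have clb: "closure bidisk = cball 0 1 \<times> cball 0 1"
    by (simp add: closure_Times)
  have intb: "interior bidisk = bidisk"
    by (simp add: interior_open open_Times)
  have bd: "closure W \<inter> frontier bidisk = closure W \<inter> (sphere 0 1 \<times> sphere 0 1)"
  proof (intro equalityI subsetI)
    fix q assume q: "q \<in> closure W \<inter> frontier bidisk"
    obtain z0 w0 where q0: "q = (z0, w0)" by (cases q)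
    have "q \<in> cball 0 1 \<times> cball 0 1" using q closure_mono[OF Wsub] clb by auto
    then have le: "cmod z0 \<le> 1" "cmod w0 \<le> 1" using q0 by auto
    have "q \<notin> bidisk" using q intb by (simp add: frontier_def)
    then have nb: "\<not> (cmod z0 < 1 \<and> cmod w0 < 1)" using q0 by auto
    show "q \<in> closure W \<inter> (sphere 0 1 \<times> sphere 0 1)"
    proof (rule ccontr)
      assume "q \<notin> closure W \<inter> (sphere 0 1 \<times> sphere 0 1)"
      then have c: "(cmod z0 < 1 \<and> cmod w0 = 1) \<or> (cmod z0 = 1 \<and> cmod w0 < 1)"
        using q q0 le nb by auto
      obtain sq where sq: "\<forall>n. sq n \<in> W" "sq \<longlonglongrightarrow> (z0, w0)"
        using q q0 closure_sequential by blast
      have "\<forall>k. K U (fst (sq k)) (snd (sq k)) \<and> cmod (fst (sq k)) < 1 \<and> cmod (snd (sq k)) < 1"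
        using sq(1) unfolding W_def by (auto simp: case_prod_beta)
      moreover have "(\<lambda>k. fst (sq k)) \<longlonglongrightarrow> z0" using tendsto_fst[OF sq(2)] by simp
      moreover have "(\<lambda>k. snd (sq k)) \<longlonglongrightarrow> w0" using tendsto_snd[OF sq(2)] by simp
      ultimately show False using bdry[OF U _ _ _ c, of "\<lambda>k. fst (sq k)" "\<lambda>k. snd (sq k)"] by blast
    qed
  next
    fix q assume q: "q \<in> closure W \<inter> (sphere 0 1 \<times> sphere 0 1)"
    then have "q \<in> closure bidisk" using closure_mono[OF Wsub] by auto
    moreover have "q \<notin> bidisk" using q by auto
    ultimately show "q \<in> closure W \<inter> frontier bidisk" using q intb by (simp add: frontier_def)
  qed
  show ?thesis
  proof (intro conjI impI)
    show "V = {(z, w). (z, w) \<in> bidisk \<and>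
           det (cadj (blkD U) + mat w ** cadj (blkB U) ** matrix_inv (mat 1 - mat w ** cadj (blkA U))
                ** cadj (blkC U) - mat z) = 0}" using S2 VW by simp
    show "V = {(z, w). (z, w) \<in> bidisk \<and>
           det (block (blkA U - mat w) (mat z ** blkB U) (blkC U) (mat z ** blkD U - mat 1)) = 0}"
      using S3 VW by simp
    assume "V \<noteq> {}"
    then show "distinguished_variety V"
      unfolding distinguished_variety_def using Vp bd VW by blast
  qed
qed

end
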